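(* Let $A$ be a finite set of options with at least two elements, $v$ a Llull matrix on $A$, $v^*$ its path scores and $T$ its set of path-top choices (as defined in the context). An option $x\in A$ satisfies $T=\{x\}$ if and only if $v^*_{xy}>v^*_{yx}$ for all $y\in A\setminus\{x\}$.
   Context: A Llull matrix on a finite set $A$ is a family of real numbers $v_{xy}\in[0,1]$, indexed by ordered pairs $(x,y)$ of distinct elements of $A$, with $v_{xy}+v_{yx}\le 1$. The path scores are $v^*_{xy}=\max \min(v_{x_0x_1},\dots,v_{x_{m-1}x_m})$, the maximum over all paths $x_0x_1\dots x_m$ with $m\ge1$, $x_0=x$, $x_m=y$, the $x_i$ pairwise distinct. The ranking relation $\succeq$ is defined by: $x\succeq y$ iff there is a path $x_0\dots x_m$ from $x$ to $y$ with $v^*_{x_ix_{i+1}}\ge v^*_{x_{i+1}x_i}$ for all $i<m$. An option $x$ is a path-top choice if $x\succeq y$ for every $y\ne x$; $T$ is the set of path-top choices. *)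

theory Defs
  imports Main Complex_Main
begin

text \<open>A Llull matrix on the finite set A: v x y \<in> [0,1] for distinct x, y \<in> A,
  with v x y + v y x \<le> 1.  Values of v outside distinct pairs of A are irrelevant.\<close>
definition llull_matrix :: "'a set \<Rightarrow> ('a \<Rightarrow> 'a \<Rightarrow> real) \<Rightarrow> bool" where
  "llull_matrix A v \<longleftrightarrow>
     (\<forall>x\<in>A. \<forall>y\<in>A. x \<noteq> y \<longrightarrow> 0 \<le> v x y \<and> v x y \<le> 1 \<and> v x y + v y x \<le> 1)"

definition is_path :: "'a set \<Rightarrow> 'a \<Rightarrow> 'a \<Rightarrow> 'a list \<Rightarrow> bool" where
  "is_path A x y p \<longleftrightarrow> 2 \<le> length p \<and> distinct p \<and> set p \<subseteq> A \<and> hd p = x \<and> last p = y"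

definition edges :: "'a list \<Rightarrow> ('a \<times> 'a) list" where
  "edges p = zip p (tl p)"

definition path_strength :: "('a \<Rightarrow> 'a \<Rightarrow> real) \<Rightarrow> 'a list \<Rightarrow> real" where
  "path_strength v p = Min (set (map (\<lambda>(a, b). v a b) (edges p)))"

text \<open>Path scores v*_{xy} (meaningful for distinct x, y in A).\<close>
definition path_score :: "'a set \<Rightarrow> ('a \<Rightarrow> 'a \<Rightarrow> real) \<Rightarrow> 'a \<Rightarrow> 'a \<Rightarrow> real" where
  "path_score A v x y = Max {path_strength v p | p. is_path A x y p}"

definition ranks :: "'a set \<Rightarrow> ('a \<Rightarrow> 'a \<Rightarrow> real) \<Rightarrow> 'a \<Rightarrow> 'a \<Rightarrow> bool" where
  "ranks A v x y \<longleftrightarrow> (\<exists>p. is_path A x y p \<and>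
      (\<forall>(a, b)\<in>set (edges p). path_score A v a b \<ge> path_score A v b a))"

definition path_top :: "'a set \<Rightarrow> ('a \<Rightarrow> 'a \<Rightarrow> real) \<Rightarrow> 'a set" where
  "path_top A v = {x\<in>A. \<forall>y\<in>A. y \<noteq> x \<longrightarrow> ranks A v x y}"

end

theory Submission
  imports Defs
begin

lemma edges_Cons2: "edges (a # b # l) = (a,b) # edges (b # l)"
  by (simp add: edges_def)

lemma edges_append: "set (edges zs) \<subseteq> set (edges (ys @ zs))"
proof (induction ys)
  case Nil then show ?case by simp
next
  case (Cons a ys)
  show ?case
  proof (cases "ys @ zs")
    case Nil then show ?thesis by (simp add: edges_def)
  next
    case (Cons b l)
    then show ?thesis using Cons.IH by (auto simp add: edges_Cons2)
  qed
qed

lemma suffix_path: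
  assumes "is_path A x z p" "y \<in> set p" "y \<noteq> z"
  shows "\<exists>q. is_path A y z q \<and> set (edges q) \<subseteq> set (edges p)"
proof -
  obtain p1 p2 where p: "p = p1 @ y # p2" using assms(2) split_list by metis
  have "p2 \<noteq> []" using assms unfolding is_path_def p by auto
  then have "is_path A y z (y # p2)" using assms(1) unfolding is_path_def p by (auto simp: Suc_le_eq)
  moreover have "set (edges (y # p2)) \<subseteq> set (edges p)" using p edges_append by metis
  ultimately show ?thesis by blast
qed

lemma prepend_path:
  assumes "is_path A x z p" "y \<notin> set p" "y \<in> A"
  shows "is_path A y z (y # p) \<and> set (edges (y # p)) = insert (y,x) (set (edges p))"
proof -
  obtain l where p: "p = x # l" using assms(1) unfolding is_path_def
    by (cases p) auto
  show ?thesis using assms unfolding is_path_def p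
    by (auto simp: edges_def)
qed

lemma single_path:
  assumes "a \<in> A" "b \<in> A" "a \<noteq> b"
  shows "is_path A a b [a,b] \<and> set (edges [a,b]) = {(a,b)}"
  using assms by (simp add: is_path_def edges_def)

theorem corollary2p3:
  fixes A :: "'a set" and v :: "'a \<Rightarrow> 'a \<Rightarrow> real" and x :: 'a
  assumes "finite A" and "card A \<ge> 2" and "llull_matrix A v" and "x \<in> A"
  shows "path_top A v = {x} \<longleftrightarrow>
         (\<forall>y\<in>A - {x}. path_score A v x y > path_score A v y x)"
proof
  assume T: "path_top A v = {x}"
  show "\<forall>y\<in>A - {x}. path_score A v x y > path_score A v y x"
  proof (rule ballI, rule ccontr)
    fix y assume y: "y \<in> A - {x}" and ng: "\<not> path_score A v y x < path_score A v x y"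
    have xT: "x \<in> path_top A v" using T by simp
    have "y \<in> path_top A v" unfolding path_top_def
    proof (intro CollectI conjI ballI impI)
      show "y \<in> A" using y by simp
      fix z assume z: "z \<in> A" "z \<noteq> y"
      show "ranks A v y z"
      proof (cases "z = x")
        case True
        then show ?thesis using single_path[of y A x] y ng assms(4)
          unfolding ranks_def by (intro exI[of _ "[y,x]"]) auto
      next
        case False
        then obtain p where p: "is_path A x z p"
          "\<forall>(a, b)\<in>set (edges p). path_score A v a b \<ge> path_score A v b a"
          using xT z unfolding path_top_def ranks_def by auto
        show ?thesis
        proof (cases "y \<in> set p")
          case True
          then obtain q where "is_path A y z q" "set (edges q) \<subseteq> set (edges p)"
            using suffix_path[OF p(1) _ z(2)[symmetric]] z by metis
          then show ?thesis using p(2) unfolding ranks_def by blast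
        next
          case False
          then have "is_path A y z (y # p) \<and> set (edges (y # p)) = insert (y,x) (set (edges p))"
            using prepend_path[OF p(1)] y by auto
          then show ?thesis using p(2) ng unfolding ranks_def
            by (intro exI[of _ "y # p"]) auto
        qed
      qed
    qed
    then show False using T y by auto
  qed
next
  assume S: "\<forall>y\<in>A - {x}. path_score A v x y > path_score A v y x"
  have xT: "x \<in> path_top A v" unfolding path_top_def
  proof (intro CollectI conjI ballI impI)
    show "x \<in> A" by fact
    fix z assume z: "z \<in> A" "z \<noteq> x"
    show "ranks A v x z"
    proof -
      have "is_path A x z [x, z] \<and> set (edges [x, z]) = {(x, z)}"
        using single_path[of x A z] z assms(4) by auto
      moreover have "path_score A v z x < path_score A v x z" using S z by auto
      ultimately show ?thesis unfolding ranks_def by (intro exI[of _ "[x,z]"]) auto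
    qed
  qed
  have "z = x" if zT: "z \<in> path_top A v" for z
  proof (rule ccontr)
    assume zx: "z \<noteq> x"
    obtain p where p: "is_path A z x p"
      "\<forall>(a, b)\<in>set (edges p). path_score A v a b \<ge> path_score A v b a"
      using zT zx assms(4) unfolding path_top_def ranks_def by auto
    have "length p \<ge> 2" "distinct p" "last p = x" "set p \<subseteq> A"
      using p(1) unfolding is_path_def by auto
    then obtain l w where pl: "p = l @ [w, x]"
    proof -
      obtain q where q: "p = q @ [x]"
        using \<open>length p \<ge> 2\<close> \<open>last p = x\<close>
        by (metis append_butlast_last_id list.size(3) not_numeral_le_zero)
      then have "q \<noteq> []" using \<open>length p \<ge> 2\<close> by auto
      then obtain l w where "q = l @ [w]" by (metis rev_exhaust)
      then show ?thesis using q that by simp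
    qed
    have "(w,x) \<in> set (edges p)"
      using edges_append[of "[w,x]" l] pl by (simp add: edges_def)
    then have ge: "path_score A v w x \<ge> path_score A v x w" using p(2) by auto
    have "w \<in> A - {x}" using \<open>distinct p\<close> \<open>set p \<subseteq> A\<close> pl by auto
    then have "path_score A v w x < path_score A v x w" using S by blast
    then show False using ge by linarith
  qed
  then show "path_top A v = {x}" using xT by blast
qed

end
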